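(* Let $q\in\mathbb{N}\setminus\{1\}$, let $X$ be the geometric armadillo tail with parameter $r=\frac1q$, and let $k>2$ be an integer. Then there exists a saddle connection, called $\mathrm{bsc}_k'$, namely the straight-line trajectory of slope $\frac{q}{2q-1}$ starting at the singular point $(1+\frac1q+\dots+\frac1{q^{k-1}},0)$ (the lower right vertex of $\square_k$): this trajectory reaches the singularity again after finite length without passing through it in between.
   Context: Set $l_k=q^{-(k-1)}$, $s_k=l_1+\dots+l_k$ ($s_0=0$), and $\square_k=[s_{k-1},s_k]\times[0,l_k]\subset\mathbb{R}^2$. The geometric armadillo tail with parameter $\frac1q$ is obtained from $P=\bigcup_k\square_k$ by gluing the top edge of each $\square_k$ to its bottom edge by vertical translation, and for each $k\ge1$ gluing $\{s_k\}\times[l_{k+1},l_k]$ by horizontal translation to $\{0\}\times[l_{k+1},l_k]$; then taking the metric completion, in which all vertices of $P$ become a single wild singularity. Trajectories and slopes are computed in the polygonal representation $P$ with these gluings. A saddle connection is a closed straight-line segment from the singularity to itself with no singular point in its interior. *)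

theory Defs
  imports "HOL-Analysis.Analysis"
begin

definition side :: "nat \<Rightarrow> nat \<Rightarrow> real" where
  "side q k = (1 / real q) ^ (k - 1)"

definition spos :: "nat \<Rightarrow> nat \<Rightarrow> real" where
  "spos q k = (\<Sum>i = 1..k. side q i)"

definition square :: "nat \<Rightarrow> nat \<Rightarrow> (real \<times> real) set" where
  "square q k = {spos q (k - 1) .. spos q k} \<times> {0 .. side q k}"

definition polygon :: "nat \<Rightarrow> (real \<times> real) set" where
  "polygon q = (\<Union>k\<in>{1..}. square q k)"

text \<open>The vertices of the polygon; they all represent the single (wild) singularity.\<close>
definition singular_pts :: "nat \<Rightarrow> (real \<times> real) set" where
  "singular_pts q =
     {(spos q k, 0) | k. True}
   \<union> {(0, side q k) | k. k \<ge> 1}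
   \<union> {(spos q k, side q k) | k. k \<ge> 1}
   \<union> {(spos q (k - 1), side q k) | k. k \<ge> 1}"

text \<open>Edge gluings (points in the interiors of glued edges): top edge of each square to its
  bottom edge by vertical translation, and the part of the right edge of square k above
  square k+1 to the left edge part at the same heights by horizontal translation.\<close>
definition glue1 :: "nat \<Rightarrow> real \<times> real \<Rightarrow> real \<times> real \<Rightarrow> bool" where
  "glue1 q b a \<longleftrightarrow>
     (\<exists>k\<ge>1. snd b = side q k \<and> spos q (k - 1) < fst b \<and> fst b < spos q k \<and> a = (fst b, 0))
   \<or> (\<exists>k\<ge>1. fst b = spos q k \<and> side q (Suc k) < snd b \<and> snd b < side q k \<and> a = (0, snd b))"

definition glued :: "nat \<Rightarrow> real \<times> real \<Rightarrow> real \<times> real \<Rightarrow> bool" where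
  "glued q b a \<longleftrightarrow> glue1 q b a \<or> glue1 q a b"

definition saddle_connection_from ::
  "nat \<Rightarrow> real \<times> real \<Rightarrow> real \<times> real \<Rightarrow> bool" where
  "saddle_connection_from q p d \<longleftrightarrow>
     p \<in> singular_pts q \<and>
     (\<exists>n :: nat. \<exists>a b :: nat \<Rightarrow> real \<times> real. \<exists>t :: nat \<Rightarrow> real.
        n \<ge> 1 \<and> a 0 = p \<and>
        (\<forall>i<n. t i > 0 \<and> b i = a i + t i *\<^sub>R d \<and> closed_segment (a i) (b i) \<subseteq> polygon q) \<and>
        (\<forall>i. Suc i < n \<longrightarrow> glued q (b i) (a (Suc i)) \<and> b i \<notin> singular_pts q) \<and>
        (\<forall>i<n. open_segment (a i) (b i) \<inter> singular_pts q = {}) \<and>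
        b (n - 1) \<in> singular_pts q)"

end

theory Submission
  imports Defs
begin

definition W :: "nat \<Rightarrow> nat \<Rightarrow> real" where "W q j = (1 / real q) ^ j"

lemma side_W: "side q (Suc j) = W q j" by (simp add: side_def W_def)
lemma side_W': "j \<ge> 1 \<Longrightarrow> side q j = W q (j - 1)" by (simp add: side_def W_def)
lemma spos_0[simp]: "spos q 0 = 0" by (simp add: spos_def)
lemma spos_Suc: "spos q (Suc j) = spos q j + W q j"
  by (simp add: spos_def side_W)
lemma spos_1[simp]: "spos q 1 = 1" by (simp add: spos_def side_def)
lemma spos_Suc0[simp]: "spos q (Suc 0) = 1" by (simp add: spos_def side_def)
lemma W_1[simp]: "W q (Suc 0) = 1 / real q" by (simp add: W_def)
lemma W_pos: "q \<ge> 1 \<Longrightarrow> W q j > 0" by (simp add: W_def)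
lemma W_Suc: "q \<ge> 1 \<Longrightarrow> W q j = real q * W q (Suc j)" by (simp add: W_def)
lemma W_0[simp]: "W q 0 = 1" by (simp add: W_def)
lemma W_le: "q \<ge> 1 \<Longrightarrow> i \<le> j \<Longrightarrow> W q j \<le> W q i"
  unfolding W_def by (rule power_decreasing) auto
lemma W_shift: "q \<ge> 1 \<Longrightarrow> j \<le> k \<Longrightarrow> W q j = W q k * real q ^ (k - j)"
proof -
  assume "q \<ge> 1" "j \<le> k"
  then have "W q k = W q j * (1 / real q) ^ (k - j)"
    by (simp add: W_def flip: power_add)
  then show ?thesis using \<open>q \<ge> 1\<close> by (simp add: power_one_over field_simps)
qed

lemma spos_smono: "q \<ge> 1 \<Longrightarrow> i < j \<Longrightarrow> spos q i < spos q j"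
proof (induction j)
  case 0 then show ?case by simp
next
  case (Suc j)
  have "W q j > 0" using Suc W_pos by auto
  then show ?case using Suc by (cases "i = j") (auto simp: spos_Suc)
qed

lemma spos_less_iff: "q \<ge> 1 \<Longrightarrow> spos q i < spos q j \<longleftrightarrow> i < j"
  by (metis linorder_neqE_nat order_less_asym spos_smono)
lemma spos_le_iff: "q \<ge> 1 \<Longrightarrow> spos q i \<le> spos q j \<longleftrightarrow> i \<le> j"
  by (meson linorder_not_le spos_less_iff)
lemma spos_eq_iff: "q \<ge> 1 \<Longrightarrow> spos q i = spos q j \<longleftrightarrow> i = j"
  by (metis less_irrefl linorder_neqE_nat spos_smono)

lemma sing_fst: "b \<in> singular_pts q \<Longrightarrow> \<exists>j. fst b = spos q j"
  unfolding singular_pts_def by (auto intro: exI[of _ 0])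
lemma spos_nonneg: "q \<ge> 1 \<Longrightarrow> spos q i \<ge> 0"
  using spos_le_iff[of q 0 i] by simp

lemma sing_cases: "b \<in> singular_pts q \<Longrightarrow> (\<exists>j. b = (spos q j, 0)) \<or> (\<exists>j\<ge>1. b = (0, side q j))
   \<or> (\<exists>j\<ge>1. b = (spos q j, side q j)) \<or> (\<exists>j\<ge>1. b = (spos q (j - 1), side q j))"
  unfolding singular_pts_def by blast

lemma glue1_nonsing:
  assumes q: "q \<ge> 2" and g: "glue1 q b a" shows "b \<notin> singular_pts q"
proof
  assume bs: "b \<in> singular_pts q"
  have q1: "q \<ge> 1" using q by simp
  from g show False
  proof (unfold glue1_def, elim disjE exE conjE)
    fix m assume m: "m \<ge> 1" "snd b = side q m" "spos q (m - 1) < fst b" "fst b < spos q m"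
    have pos: "fst b > 0" using m(3) spos_nonneg[OF q1, of "m-1"] by linarith
    have sp: "snd b > 0" using m(2) W_pos[OF q1] side_W'[OF m(1)] by simp
    have nos: "fst b \<noteq> spos q j" for j
    proof
      assume "fst b = spos q j"
      then have "m - 1 < j" "j < m" using m spos_less_iff[OF q1] by auto
      then show False by simp
    qed
    from sing_fst[OF bs] nos show False by blast
  next
    fix m assume m: "m \<ge> 1" "fst b = spos q m" "side q (Suc m) < snd b" "snd b < side q m"
    have pos: "fst b > 0" using m spos_smono[OF q1, of 0 m] by simp
    have sp: "snd b > 0" using m(3) W_pos[OF q1] side_W by (metis order.strict_trans)
    from sing_cases[OF bs] show False
    proof (elim disjE exE conjE)
      fix j assume "b = (spos q j, 0)" then show False using sp by simp
    next
      fix j assume "b = (0, side q j)" then show False using pos by simp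
    next
      fix j assume j: "b = (spos q j, side q j)"
      then have "j = m" using m(2) spos_eq_iff[OF q1] by simp
      then have "snd b = side q m" using j by simp
      then show False using m(4) by simp
    next
      fix j assume j: "b = (spos q (j - 1), side q j)" "j \<ge> 1"
      then have "j - 1 = m" using m(2) spos_eq_iff[OF q1] by simp
      then have "j = Suc m" using j(2) by simp
      then have "snd b = side q (Suc m)" using j(1) by simp
      then show False using m(3) by simp
    qed
  qed
qed

lemma square_mem: "m \<ge> 1 \<Longrightarrow> spos q (m-1) \<le> x \<Longrightarrow> x \<le> spos q m \<Longrightarrow> 0 \<le> y \<Longrightarrow> y \<le> side q m
   \<Longrightarrow> (x, y) \<in> polygon q"
  unfolding polygon_def square_def by auto

lemma box1:
  assumes q: "q \<ge> 2" and m: "m \<ge> 1" and "spos q (m-1) \<le> xa" "xb \<le> spos q m" "0 \<le> ya" "yb \<le> side q m"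
  shows "(\<forall>x y. xa \<le> x \<and> x \<le> xb \<and> ya \<le> y \<and> y \<le> yb \<longrightarrow> (x, y) \<in> polygon q)
    \<and> (\<forall>x y. xa < x \<and> x < xb \<and> ya < y \<and> y < yb \<longrightarrow> (x, y) \<notin> singular_pts q)"
proof (intro conjI allI impI)
  fix x y assume "xa \<le> x \<and> x \<le> xb \<and> ya \<le> y \<and> y \<le> yb"
  then show "(x, y) \<in> polygon q" using assms by (intro square_mem[OF m]) auto
next
  fix x y assume xy: "xa < x \<and> x < xb \<and> ya < y \<and> y < yb"
  have q1: "q \<ge> 1" using q by simp
  have nos: "x \<noteq> spos q j" for j
  proof
    assume "x = spos q j"
    then have "m - 1 < j" "j < m" using xy assms spos_less_iff[OF q1]
      by (meson le_less_trans less_le_trans)+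
    then show False by simp
  qed
  show "(x, y) \<notin> singular_pts q"
  proof
    assume "(x, y) \<in> singular_pts q"
    from sing_fst[OF this] nos show False by auto
  qed
qed

lemma box2:
  assumes q: "q \<ge> 2" and m: "m \<ge> 1" and as: "spos q (m-1) \<le> xa" "xb \<le> spos q (Suc m)" "0 \<le> ya" "yb \<le> side q (Suc m)"
  shows "(\<forall>x y. xa \<le> x \<and> x \<le> xb \<and> ya \<le> y \<and> y \<le> yb \<longrightarrow> (x, y) \<in> polygon q)
    \<and> (\<forall>x y. xa < x \<and> x < xb \<and> ya < y \<and> y < yb \<longrightarrow> (x, y) \<notin> singular_pts q)"
proof (intro conjI allI impI)
  have q1: "q \<ge> 1" using q by simp
  have sl: "side q (Suc m) \<le> side q m" using W_le[OF q1, of "m-1" m] m side_W[of q m] side_W'[OF m]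
    by simp
  fix x y assume xy: "xa \<le> x \<and> x \<le> xb \<and> ya \<le> y \<and> y \<le> yb"
  show "(x, y) \<in> polygon q"
  proof (cases "x \<le> spos q m")
    case True then show ?thesis using xy as sl by (intro square_mem[OF m]) auto
  next
    case False then show ?thesis using xy as by (intro square_mem[of "Suc m"]) auto
  qed
next
  fix x y assume xy: "xa < x \<and> x < xb \<and> ya < y \<and> y < yb"
  have q1: "q \<ge> 1" using q by simp
  have sl: "side q (Suc m) \<le> side q m" using W_le[OF q1, of "m-1" m] m side_W[of q m] side_W'[OF m]
    by simp
  have x0: "x > 0" using xy as spos_nonneg[OF q1, of "m-1"] by linarith
  have y0: "y > 0" using xy as by linarith
  have ys: "y < side q (Suc m)" using xy as by linarith
  have nos: "x = spos q j \<Longrightarrow> j = m" for j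
  proof -
    assume "x = spos q j"
    then have "m - 1 < j" "j < Suc m" using xy as spos_less_iff[OF q1]
      by (meson le_less_trans less_le_trans)+
    then show "j = m" by simp
  qed
  show "(x, y) \<notin> singular_pts q"
  proof
    assume bs: "(x, y) \<in> singular_pts q"
    from sing_cases[OF bs] show False
    proof (elim disjE exE conjE)
      fix j assume "(x, y) = (spos q j, 0)" then show False using y0 by simp
    next
      fix j assume "(x, y) = (0, side q j)" then show False using x0 by simp
    next
      fix j assume j: "(x, y) = (spos q j, side q j)"
      then have "j = m" using nos by simp
      then have "y = side q m" using j by simp
      then show False using ys sl by simp
    next
      fix j assume j: "(x, y) = (spos q (j - 1), side q j)" "j \<ge> 1"
      then have "j - 1 = m" using nos by simp
      then have "j = Suc m" using j(2) by simp
      then have "y = side q (Suc m)" using j(1) by simp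
      then show False using ys by simp
    qed
  qed
qed

definition good_seg :: "nat \<Rightarrow> real \<times> real \<Rightarrow> real \<times> real \<Rightarrow> bool" where
  "good_seg q a b \<longleftrightarrow> fst a < fst b \<and> snd a < snd b
    \<and> (snd b - snd a) * (2 * real q - 1) = (fst b - fst a) * real q
    \<and> (\<forall>x y. fst a \<le> x \<and> x \<le> fst b \<and> snd a \<le> y \<and> y \<le> snd b \<longrightarrow> (x, y) \<in> polygon q)
    \<and> (\<forall>x y. fst a < x \<and> x < fst b \<and> snd a < y \<and> y < snd b \<longrightarrow> (x, y) \<notin> singular_pts q)"

lemma good_seg_use:
  assumes q: "q \<ge> 2" and g: "good_seg q a b"
  defines "t \<equiv> (fst b - fst a) / (2 * real q - 1)"
  shows "t > 0" "b = a + t *\<^sub>R (real (2 * q - 1), real q)"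
    "closed_segment a b \<subseteq> polygon q" "open_segment a b \<inter> singular_pts q = {}"
proof -
  have c: "2 * real q - 1 > 0" using q by simp
  have rc: "real (2 * q - 1) = 2 * real q - 1" using q by (simp add: of_nat_diff)
  from g have g1: "fst a < fst b" "snd a < snd b"
    "(snd b - snd a) * (2 * real q - 1) = (fst b - fst a) * real q"
    and g4: "\<forall>x y. fst a \<le> x \<and> x \<le> fst b \<and> snd a \<le> y \<and> y \<le> snd b \<longrightarrow> (x, y) \<in> polygon q"
    and g5: "\<forall>x y. fst a < x \<and> x < fst b \<and> snd a < y \<and> y < snd b \<longrightarrow> (x, y) \<notin> singular_pts q"
    unfolding good_seg_def by auto
  show "t > 0" unfolding t_def using g1 c by simp
  have "fst a + t * (2 * real q - 1) = fst b" unfolding t_def using c by simp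
  moreover have "snd a + t * real q = snd b" unfolding t_def using c g1(3)
    by (simp add: field_simps)
  ultimately show "b = a + t *\<^sub>R (real (2 * q - 1), real q)" unfolding rc
    by (simp add: prod_eq_iff)
  show "closed_segment a b \<subseteq> polygon q"
  proof
    fix z assume "z \<in> closed_segment a b"
    then obtain u where u: "0 \<le> u" "u \<le> 1" "z = (1 - u) *\<^sub>R a + u *\<^sub>R b"
      unfolding in_segment by blast
    have "fst z = (1 - u) * fst a + u * fst b" "snd z = (1 - u) * snd a + u * snd b"
      using u(3) by simp_all
    then have fz: "fst z = fst a + u * (fst b - fst a)" "snd z = snd a + u * (snd b - snd a)"
      by (simp_all add: algebra_simps)
    have "u * (fst b - fst a) \<le> fst b - fst a" "u * (snd b - snd a) \<le> snd b - snd a"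
      using u g1 by (simp_all add: mult_left_le_one_le)
    moreover have "u * (fst b - fst a) \<ge> 0" "u * (snd b - snd a) \<ge> 0" using u g1 by simp_all
    ultimately have "(fst z, snd z) \<in> polygon q" using g4 fz by auto
    then show "z \<in> polygon q" by simp
  qed
  show "open_segment a b \<inter> singular_pts q = {}"
  proof (rule ccontr)
    assume "open_segment a b \<inter> singular_pts q \<noteq> {}"
    then obtain z where z: "z \<in> open_segment a b" "z \<in> singular_pts q" by blast
    then obtain u where u: "0 < u" "u < 1" "z = (1 - u) *\<^sub>R a + u *\<^sub>R b"
      unfolding in_segment by blast
    have "fst z = (1 - u) * fst a + u * fst b" "snd z = (1 - u) * snd a + u * snd b"
      using u(3) by simp_all
    then have fz: "fst z = fst a + u * (fst b - fst a)" "snd z = snd a + u * (snd b - snd a)"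
      by (simp_all add: algebra_simps)
    have "u * (fst b - fst a) < fst b - fst a" "u * (snd b - snd a) < snd b - snd a"
      using u g1 by simp_all
    moreover have "u * (fst b - fst a) > 0" "u * (snd b - snd a) > 0" using u g1 by simp_all
    ultimately have "(fst z, snd z) \<notin> singular_pts q" using g5 fz by auto
    then show False using z by simp
  qed
qed

lemma good_seg_box1:
  assumes q: "q \<ge> 2" and m: "m \<ge> 1" and "spos q (m-1) \<le> fst a" "fst a < fst b" "fst b \<le> spos q m"
    "0 \<le> snd a" "snd a < snd b" "snd b \<le> side q m"
    "(snd b - snd a) * (2 * real q - 1) = (fst b - fst a) * real q"
  shows "good_seg q a b"
  using box1[OF q m, of "fst a" "fst b" "snd a" "snd b"] assms unfolding good_seg_def by auto

lemma good_seg_box2: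
  assumes q: "q \<ge> 2" and m: "m \<ge> 1" and "spos q (m-1) \<le> fst a" "fst a < fst b" "fst b \<le> spos q (Suc m)"
    "0 \<le> snd a" "snd a < snd b" "snd b \<le> side q (Suc m)"
    "(snd b - snd a) * (2 * real q - 1) = (fst b - fst a) * real q"
  shows "good_seg q a b"
  using box2[OF q m, of "fst a" "fst b" "snd a" "snd b"] assms unfolding good_seg_def by auto

definition eps :: "nat \<Rightarrow> nat \<Rightarrow> real" where
  "eps q k = real q * W q k / (2 * real q - 1)"
definition yr :: "nat \<Rightarrow> nat \<Rightarrow> nat \<Rightarrow> real" where
  "yr q k r = (real r * real q * W q k + real q) / (2 * real q - 1)"
definition xj :: "nat \<Rightarrow> nat \<Rightarrow> nat \<Rightarrow> nat \<Rightarrow> real" where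
  "xj q k r j = spos q j - W q j - real r * W q k"
definition PA :: "nat \<Rightarrow> nat \<Rightarrow> nat \<Rightarrow> nat \<Rightarrow> real \<times> real" where
  "PA q k r p = (if p = 0 then (0, real r * eps q k) else if p = 1 then (0, yr q k r)
     else (xj q k r (p - 1), 0))"
definition PB :: "nat \<Rightarrow> nat \<Rightarrow> nat \<Rightarrow> nat \<Rightarrow> real \<times> real" where
  "PB q k r p = (if p = 0 then (1, yr q k r) else if p = 1 then (xj q k r 1, 1)
     else if p \<le> k then (xj q k r p, side q p) else (spos q k, real (Suc r) * eps q k))"

lemma Wk_small: assumes "q \<ge> 2" "k \<ge> 3" shows "real q * W q k \<le> 1 / 4"
proof -
  have q1: "q \<ge> 1" using assms by simp
  have "real q * W q k = W q (k - 1)" using W_Suc[OF q1, of "k-1"] assms by simp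
  also have "\<dots> \<le> W q 2" using W_le[OF q1, of 2 "k-1"] assms by simp
  also have "\<dots> = 1 / (real q)^2" by (simp add: W_def power_one_over)
  also have "\<dots> \<le> 1 / 4"
  proof -
    have "(real q)^2 \<ge> 2^2" using assms by (intro power_mono) auto
    then show ?thesis by (simp add: divide_simps)
  qed
  finally show ?thesis .
qed

lemma Wj_ge: assumes "q \<ge> 2" "j < k" shows "W q j \<ge> real q * W q k"
proof -
  have q1: "q \<ge> 1" using assms by simp
  have "real q * W q k = W q (k - 1)" using W_Suc[OF q1, of "k-1"] assms by simp
  also have "\<dots> \<le> W q j" using W_le[OF q1, of j "k-1"] assms by simp
  finally show ?thesis .
qed

lemma seg0_good:
  assumes q: "q \<ge> 2" and k: "k \<ge> 3"
  shows "good_seg q (spos q k, 0) (spos q (Suc k), eps q k)"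
proof -
  have q1: "q \<ge> 1" using q by simp
  define Q where "Q = real q"
  define z where "z = W q k"
  have Q2: "Q \<ge> 2" using q by (simp add: Q_def)
  have z0: "z > 0" using W_pos[OF q1] by (simp add: z_def)
  have e: "eps q k = Q * z / (2 * Q - 1)" by (simp add: eps_def Q_def z_def)
  have sk: "spos q (Suc k) = spos q k + z" by (simp add: spos_Suc z_def)
  have sd: "side q (Suc k) = z" by (simp add: side_W z_def)
  have e0: "eps q k > 0" using e Q2 z0 by simp
  have e1: "eps q k \<le> z" unfolding e using Q2 z0 by (simp add: divide_simps)
  have bx: "(\<forall>x y. spos q k \<le> x \<and> x \<le> spos q (Suc k) \<and> 0 \<le> y \<and> y \<le> eps q k \<longrightarrow> (x, y) \<in> polygon q)
    \<and> (\<forall>x y. spos q k < x \<and> x < spos q (Suc k) \<and> 0 < y \<and> y < eps q k \<longrightarrow> (x, y) \<notin> singular_pts q)"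
    using box1[OF q, of "Suc k" "spos q k" "spos q (Suc k)" 0 "eps q k"] e1 sd by simp
  show ?thesis unfolding good_seg_def fst_conv snd_conv
    using bx e0 z0 Q2 by (simp add: sk e Q_def[symmetric] field_simps)
qed

lemma segA_good:
  assumes q: "q \<ge> 2" and k: "k \<ge> 3" and r: "1 \<le> r" "r \<le> q - 1"
  shows "good_seg q (PA q k r 0) (PB q k r 0)"
proof -
  have q1: "q \<ge> 1" using q by simp
  define Q where "Q = real q"
  define z where "z = W q k"
  define R where "R = real r"
  have Q2: "Q \<ge> 2" using q by (simp add: Q_def)
  have z0: "z > 0" using W_pos[OF q1] by (simp add: z_def)
  have zs: "Q * z \<le> 1/4" using Wk_small[OF q k] by (simp add: Q_def z_def)
  have R1: "R \<ge> 1" "R \<le> Q - 1" using r q by (auto simp: R_def Q_def of_nat_diff)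
  have Rz: "R * (Q * z) \<le> (Q - 1) * (1/4)" using R1 zs z0 Q2
    by (intro mult_mono) auto
  have P: "PA q k r 0 = (0, R * (Q * z) / (2 * Q - 1))" "PB q k r 0 = (1, (R * (Q * z) + Q) / (2 * Q - 1))"
    by (simp_all add: PA_def PB_def eps_def yr_def Q_def z_def R_def algebra_simps)
  have c: "2 * Q - 1 > 0" using Q2 by simp
  have y1: "(R * (Q * z) + Q) / (2 * Q - 1) \<le> 1" using c Rz Q2 by (simp add: divide_simps)
  have y0: "0 \<le> R * (Q * z) / (2 * Q - 1)" using c R1 z0 Q2 by simp
  have y01: "R * (Q * z) / (2 * Q - 1) < (R * (Q * z) + Q) / (2 * Q - 1)" using c Q2
    by (simp add: divide_strict_right_mono)
  have rat: "((R * (Q * z) + Q) / (2 * Q - 1) - R * (Q * z) / (2 * Q - 1)) * (2 * Q - 1) = (1 - 0) * Q"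
    using c by (simp add: add_divide_distrib)
  show ?thesis unfolding P
    by (rule good_seg_box1[OF q order.refl]) (use y1 y0 y01 rat in \<open>simp_all add: side_def Q_def\<close>)
qed

lemma segB_good:
  assumes q: "q \<ge> 2" and k: "k \<ge> 3" and r: "1 \<le> r" "r \<le> q - 1"
  shows "good_seg q (PA q k r 1) (PB q k r 1)"
proof -
  have q1: "q \<ge> 1" using q by simp
  define Q where "Q = real q"
  define z where "z = W q k"
  define R where "R = real r"
  have Q2: "Q \<ge> 2" using q by (simp add: Q_def)
  have z0: "z > 0" using W_pos[OF q1] by (simp add: z_def)
  have zs: "Q * z \<le> 1/4" using Wk_small[OF q k] by (simp add: Q_def z_def)
  have R1: "R \<ge> 1" "R \<le> Q - 1" using r q by (auto simp: R_def Q_def of_nat_diff)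
  have Rz: "R * (Q * z) \<le> (Q - 1) * (1/4)" using R1 zs z0 Q2
    by (intro mult_mono) auto
  have P: "PA q k r 1 = (0, (R * (Q * z) + Q) / (2 * Q - 1))" "PB q k r 1 = (1 - 1/Q - R * z, 1)"
    by (simp_all add: PA_def PB_def eps_def yr_def xj_def Q_def z_def R_def algebra_simps)
  have c: "2 * Q - 1 > 0" using Q2 by simp
  have y1: "(R * (Q * z) + Q) / (2 * Q - 1) < 1" using c Rz Q2 by (simp add: divide_simps)
  have y0: "0 \<le> (R * (Q * z) + Q) / (2 * Q - 1)" using c R1 z0 Q2 by simp
  have x0: "0 < 1 - 1/Q - R * z"
  proof -
    have "Q * (R * z) \<le> (Q - 1) * (1/4)" using Rz by (simp add: algebra_simps)
    moreover have "(Q - 1) * (1/4) < Q - 1" using Q2 by simp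
    ultimately have "Q * (R * z) < Q - 1" by linarith
    then have "R * z < (Q - 1) / Q" using Q2 by (simp add: divide_simps algebra_simps)
    then show ?thesis using Q2 by (simp add: diff_divide_distrib)
  qed
  have x1: "1 - 1/Q - R * z \<le> 1"
  proof -
    have "R * z \<ge> 0" "1/Q \<ge> 0" using R1 z0 Q2 by simp_all
    then show ?thesis by linarith
  qed
  have rat: "(1 - (R * (Q * z) + Q) / (2 * Q - 1)) * (2 * Q - 1) = (1 - 1/Q - R * z - 0) * Q"
    using c Q2 by (simp add: field_simps)
  show ?thesis unfolding P
    by (rule good_seg_box1[OF q order.refl]) (use y1 y0 x0 x1 rat in \<open>simp_all add: side_def Q_def\<close>)
qed

lemma segC_good:
  assumes q: "q \<ge> 2" and k: "k \<ge> 3" and r: "1 \<le> r" "r \<le> q - 1" and j: "1 \<le> j" "j < k"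
  shows "good_seg q (PA q k r (Suc j)) (PB q k r (Suc j))"
proof -
  have q1: "q \<ge> 1" using q by simp
  define Q where "Q = real q"
  define z where "z = W q k"
  define R where "R = real r"
  have Q2: "Q \<ge> 2" using q by (simp add: Q_def)
  have z0: "z > 0" using W_pos[OF q1] by (simp add: z_def)
  have R1: "R \<ge> 1" "R \<le> Q - 1" using r q by (auto simp: R_def Q_def of_nat_diff)
  have Wj: "W q j \<ge> Q * z" using Wj_ge[OF q j(2)] by (simp add: Q_def z_def)
  have WjS: "W q j = Q * W q (Suc j)" using W_Suc[OF q1, of j] by (simp add: Q_def)
  have jj: "Suc (j - 1) = j" using j by simp
  have Wjm: "W q (j - 1) = Q * W q j" using W_Suc[OF q1, of "j-1"] unfolding jj Q_def .
  have sj: "spos q j = spos q (j - 1) + W q (j - 1)" using spos_Suc[of q "j-1"] j by simp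
  have WS0: "W q (Suc j) > 0" using W_pos[OF q1] by simp
  have P: "PA q k r (Suc j) = (xj q k r j, 0)" "PB q k r (Suc j) = (xj q k r (Suc j), W q j)"
    using j by (simp_all add: PA_def PB_def side_W)
  have xs: "xj q k r j = spos q (j - 1) + (Q - 1) * W q j - R * z"
    unfolding xj_def sj Wjm by (simp add: Q_def z_def R_def algebra_simps)
  have xs2: "xj q k r (Suc j) = xj q k r j + (2 * Q - 1) * W q (Suc j)"
    by (simp add: xj_def spos_Suc WjS Q_def z_def R_def algebra_simps)
  have a1: "spos q (j - 1) \<le> xj q k r j"
  proof -
    have "R * z \<le> (Q - 1) * z" using R1 z0 by (intro mult_right_mono) auto
    also have "\<dots> \<le> (Q - 1) * W q j" using Wj Q2 z0
      by (intro mult_left_mono) (auto intro: order.trans[of _ "Q * z"])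
    finally show ?thesis unfolding xs by simp
  qed
  have a2: "xj q k r j < xj q k r (Suc j)" unfolding xs2 using Q2 WS0 by simp
  have a3: "xj q k r (Suc j) \<le> spos q (Suc j)"
  proof -
    have "R * z \<ge> 0" using R1 z0 by simp
    then show ?thesis using W_pos[OF q1, of "Suc j"] unfolding xj_def R_def z_def by linarith
  qed
  have a4: "0 < W q j" using W_pos[OF q1] by simp
  have rat: "(W q j - 0) * (2 * Q - 1) = (xj q k r (Suc j) - xj q k r j) * Q"
    unfolding xs2 WjS by (simp add: algebra_simps)
  show ?thesis unfolding P
    by (rule good_seg_box2[OF q j(1)]) (use a1 a2 a3 a4 rat in \<open>simp_all add: side_W Q_def\<close>)
qed

lemma segD_good:
  assumes q: "q \<ge> 2" and k: "k \<ge> 3" and r: "1 \<le> r" "r + 2 \<le> q"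
  shows "good_seg q (PA q k r (Suc k)) (PB q k r (Suc k))"
proof -
  have q1: "q \<ge> 1" using q by simp
  define Q where "Q = real q"
  define z where "z = W q k"
  define R where "R = real r"
  have Q2: "Q \<ge> 2" using q by (simp add: Q_def)
  have z0: "z > 0" using W_pos[OF q1] by (simp add: z_def)
  have R1: "R \<ge> 1" "R + 2 \<le> Q" using r q by (auto simp: R_def Q_def)
  have Wkm: "W q (k - 1) = Q * z" using W_Suc[OF q1, of "k-1"] k by (simp add: Q_def z_def)
  have sk: "spos q k = spos q (k - 1) + Q * z" using spos_Suc[of q "k-1"] k Wkm by simp
  have P: "PA q k r (Suc k) = (xj q k r k, 0)" "PB q k r (Suc k) = (spos q k, (R + 1) * (Q * z / (2 * Q - 1)))"
    using k by (simp_all add: PA_def PB_def eps_def Q_def z_def R_def)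
  have xs: "xj q k r k = spos q (k - 1) + (Q - 1 - R) * z"
    by (simp add: xj_def sk Q_def z_def R_def algebra_simps)
  have c: "2 * Q - 1 > 0" using Q2 by simp
  have a1: "spos q (k - 1) \<le> xj q k r k" unfolding xs using R1 z0 by simp
  have a2: "xj q k r k < spos q k" unfolding xs sk using R1 z0 by (simp add: mult_strict_right_mono)
  have a3: "0 < (R + 1) * (Q * z / (2 * Q - 1))" using R1 z0 c Q2 by simp
  have a4: "(R + 1) * (Q * z / (2 * Q - 1)) \<le> side q k"
  proof -
    have sq: "side q k = Q * z" using side_W'[of k q] k Wkm by simp
    have h: "(R + 1) * (Q * z) \<le> (2 * Q - 1) * (Q * z)"
      using R1 z0 Q2 by (intro mult_right_mono) auto
    have h2: "(R + 1) * (Q * z) / (2 * Q - 1) \<le> (2 * Q - 1) * (Q * z) / (2 * Q - 1)"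
      using c h by (intro divide_right_mono) auto
    have h3: "(2 * Q - 1) * (Q * z) / (2 * Q - 1) = Q * z" using c by simp
    have "(R + 1) * (Q * z) / (2 * Q - 1) \<le> Q * z" using h2 h3 by linarith
    then show ?thesis unfolding sq by (simp add: times_divide_eq_right)
  qed
  have rat: "((R + 1) * (Q * z / (2 * Q - 1)) - 0) * (2 * Q - 1) = (spos q k - xj q k r k) * Q"
    unfolding xs sk using c by (simp add: field_simps)
  show ?thesis unfolding P
    by (rule good_seg_box1[of q k]) (use q k a1 a2 a3 a4 rat in \<open>simp_all add: Q_def\<close>)
qed

lemma glue0:
  assumes q: "q \<ge> 2" and k: "k \<ge> 3"
  shows "glue1 q (spos q (Suc k), eps q k) (PA q k 1 0)"
proof -
  have q1: "q \<ge> 1" using q by simp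
  define Q where "Q = real q"
  define z where "z = W q k"
  have Q2: "Q \<ge> 2" using q by (simp add: Q_def)
  have z0: "z > 0" using W_pos[OF q1] by (simp add: z_def)
  have c: "2 * Q - 1 > 0" using Q2 by simp
  have s1: "side q (Suc k) = z" by (simp add: side_W z_def)
  have s2: "side q (Suc (Suc k)) = z / Q" using W_Suc[OF q1, of k] Q2
    by (simp add: side_W z_def Q_def)
  have e: "eps q k = Q * z / (2 * Q - 1)" by (simp add: eps_def Q_def z_def)
  have l: "z / Q < Q * z / (2 * Q - 1)"
  proof -
    have sq0: "0 < (Q - 1) * (Q - 1)" using Q2 by simp
    have sq1: "Q * Q = (Q - 1) * (Q - 1) + (2 * Q - 1)" by (simp add: algebra_simps)
    have "2 * Q - 1 < Q * Q" using sq0 sq1 by linarith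
    then have "(2 * Q - 1) * z < Q * Q * z" using z0 by (intro mult_strict_right_mono) auto
    then show ?thesis using c Q2 by (simp add: divide_simps algebra_simps)
  qed
  have u: "Q * z / (2 * Q - 1) < z" using c Q2 z0 by (simp add: divide_simps)
  show ?thesis unfolding glue1_def
    by (rule disjI2, rule exI[of _ "Suc k"]) (use l u s1 s2 e in \<open>simp add: PA_def\<close>)
qed

lemma glueA:
  assumes q: "q \<ge> 2" and k: "k \<ge> 3" and r: "1 \<le> r" "r \<le> q - 1"
  shows "glue1 q (PB q k r 0) (PA q k r 1)"
proof -
  have q1: "q \<ge> 1" using q by simp
  define Q where "Q = real q"
  define z where "z = W q k"
  define R where "R = real r"
  have Q2: "Q \<ge> 2" using q by (simp add: Q_def)
  have z0: "z > 0" using W_pos[OF q1] by (simp add: z_def)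
  have zs: "Q * z \<le> 1/4" using Wk_small[OF q k] by (simp add: Q_def z_def)
  have R1: "R \<ge> 1" "R \<le> Q - 1" using r q by (auto simp: R_def Q_def of_nat_diff)
  have Rz: "R * (Q * z) \<le> (Q - 1) * (1/4)" using R1 zs z0 Q2
    by (intro mult_mono) auto
  have c: "2 * Q - 1 > 0" using Q2 by simp
  have y: "yr q k r = (R * (Q * z) + Q) / (2 * Q - 1)" by (simp add: yr_def Q_def z_def R_def algebra_simps)
  have q4: "(Q - 1) * (1/4) < Q - 1" using Q2 by simp
  have y1: "(R * (Q * z) + Q) / (2 * Q - 1) < 1"
    using c Rz q4 by (simp add: divide_less_eq_1_pos)
  have y2: "1 / Q < (R * (Q * z) + Q) / (2 * Q - 1)"
  proof -
    define X where "X = R * (Q * z) + Q"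
    have sq0: "0 < (Q - 1) * (Q - 1)" using Q2 by simp
    have sq1: "Q * Q = (Q - 1) * (Q - 1) + (2 * Q - 1)" by (simp add: algebra_simps)
    have n0: "0 \<le> Q * (R * (Q * z))" using Q2 R1 z0 by simp
    have dl: "Q * X = Q * (R * (Q * z)) + Q * Q" unfolding X_def by (simp add: distrib_left)
    have h: "0 < Q * X - (2 * Q - 1)" using sq0 sq1 n0 dl by linarith
    have e: "X / (2 * Q - 1) - 1 / Q = (Q * X - (2 * Q - 1)) / (Q * (2 * Q - 1))"
      using c Q2 by (simp add: field_simps)
    have "0 < (Q * X - (2 * Q - 1)) / (Q * (2 * Q - 1))" using h c Q2 by simp
    then show ?thesis using e unfolding X_def by linarith
  qed
  have s2: "side q 2 = 1 / Q" by (simp add: side_def Q_def)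
  show ?thesis unfolding glue1_def
    by (rule disjI2, rule exI[of _ 1]) (use y y1 y2 s2 in \<open>simp add: PA_def PB_def side_def\<close>)
qed

lemma glueB:
  assumes q: "q \<ge> 2" and k: "k \<ge> 3" and r: "1 \<le> r" "r \<le> q - 1"
  shows "glue1 q (PB q k r 1) (PA q k r 2)"
proof -
  have q1: "q \<ge> 1" using q by simp
  define Q where "Q = real q"
  define z where "z = W q k"
  define R where "R = real r"
  have Q2: "Q \<ge> 2" using q by (simp add: Q_def)
  have z0: "z > 0" using W_pos[OF q1] by (simp add: z_def)
  have zs: "Q * z \<le> 1/4" using Wk_small[OF q k] by (simp add: Q_def z_def)
  have R1: "R \<ge> 1" "R \<le> Q - 1" using r q by (auto simp: R_def Q_def of_nat_diff)
  have Rz: "R * (Q * z) \<le> (Q - 1) * (1/4)" using R1 zs z0 Q2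
    by (intro mult_mono) auto
  have x: "xj q k r 1 = 1 - 1/Q - R * z" by (simp add: xj_def Q_def z_def R_def)
  have x0: "0 < 1 - 1/Q - R * z"
  proof -
    have "Q * (R * z) \<le> (Q - 1) * (1/4)" using Rz by (simp add: algebra_simps)
    moreover have "(Q - 1) * (1/4) < Q - 1" using Q2 by simp
    ultimately have "Q * (R * z) < Q - 1" by linarith
    then have "R * z < (Q - 1) / Q" using Q2 by (simp add: divide_simps algebra_simps)
    then show ?thesis using Q2 by (simp add: diff_divide_distrib)
  qed
  have x1: "1 - 1/Q - R * z < 1"
  proof -
    have "R * z \<ge> 0" "1/Q > 0" using R1 z0 Q2 by simp_all
    then show ?thesis by linarith
  qed
  have P: "PB q k r 1 = (xj q k r 1, 1)" "PA q k r 2 = (xj q k r 1, 0)"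
    by (simp_all add: PA_def PB_def)
  show ?thesis unfolding glue1_def P
    by (rule disjI1, rule exI[of _ 1]) (use x x0 x1 in \<open>simp add: side_def\<close>)
qed

lemma glueC:
  assumes q: "q \<ge> 2" and k: "k \<ge> 3" and r: "1 \<le> r" "r \<le> q - 1" and j: "1 \<le> j" "Suc j \<le> k"
    and nl: "\<not> (r = q - 1 \<and> Suc j = k)"
  shows "glue1 q (PB q k r (Suc j)) (PA q k r (Suc (Suc j)))"
proof -
  have q1: "q \<ge> 1" using q by simp
  define Q where "Q = real q"
  define z where "z = W q k"
  define R where "R = real r"
  have Q2: "Q \<ge> 2" using q by (simp add: Q_def)
  have z0: "z > 0" using W_pos[OF q1] by (simp add: z_def)
  have R1: "R \<ge> 1" "R \<le> Q - 1" using r q by (auto simp: R_def Q_def of_nat_diff)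
  have WjS: "W q j = Q * W q (Suc j)" using W_Suc[OF q1, of j] by (simp add: Q_def)
  have WS0: "W q (Suc j) > 0" using W_pos[OF q1] by simp
  have xs: "xj q k r (Suc j) = spos q j + (Q - 1) * W q (Suc j) - R * z"
    unfolding xj_def spos_Suc WjS by (simp add: Q_def z_def R_def algebra_simps)
  have key: "R * z < (Q - 1) * W q (Suc j)"
  proof (cases "Suc j = k")
    case True
    then have "r \<noteq> q - 1" using nl by simp
    then have "R \<le> Q - 2" using r q by (simp add: R_def Q_def of_nat_diff)
    then have "R * z < (Q - 1) * z" using z0 by (intro mult_strict_right_mono) auto
    then show ?thesis using True by (simp add: z_def)
  next
    case False
    then have "Suc j < k" using j by simp
    then have Wj: "W q (Suc j) \<ge> Q * z" using Wj_ge[OF q] by (simp add: Q_def z_def)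
    have "R * z \<le> (Q - 1) * z" using R1 z0 by (intro mult_right_mono) auto
    also have "\<dots> < (Q - 1) * (Q * z)" using Q2 z0 by simp
    also have "\<dots> \<le> (Q - 1) * W q (Suc j)" using Wj Q2 by (intro mult_left_mono) auto
    finally show ?thesis .
  qed
  have l: "spos q j < xj q k r (Suc j)" unfolding xs using key by simp
  have u: "xj q k r (Suc j) < spos q (Suc j)"
  proof -
    have "R * z \<ge> 0" using R1 z0 by simp
    then show ?thesis unfolding xj_def R_def z_def using WS0 by linarith
  qed
  have P: "PB q k r (Suc j) = (xj q k r (Suc j), side q (Suc j))" "PA q k r (Suc (Suc j)) = (xj q k r (Suc j), 0)"
    using j by (simp_all add: PA_def PB_def)
  show ?thesis unfolding glue1_def P
    apply (rule disjI1, rule exI[of _ "Suc j"])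
    using l u by simp
qed

lemma glueD:
  assumes q: "q \<ge> 2" and k: "k \<ge> 3" and r: "1 \<le> r" "r + 2 \<le> q"
  shows "glue1 q (PB q k r (Suc k)) (PA q k (Suc r) 0)"
proof -
  have q1: "q \<ge> 1" using q by simp
  define Q where "Q = real q"
  define z where "z = W q k"
  define R where "R = real r"
  have Q2: "Q \<ge> 2" using q by (simp add: Q_def)
  have z0: "z > 0" using W_pos[OF q1] by (simp add: z_def)
  have R1: "R \<ge> 1" "R + 2 \<le> Q" using r q by (auto simp: R_def Q_def)
  have c: "2 * Q - 1 > 0" using Q2 by simp
  have Wkm: "W q (k - 1) = Q * z" using W_Suc[OF q1, of "k-1"] k by (simp add: Q_def z_def)
  have sk: "side q k = Q * z" using side_W'[of k q] k Wkm by simp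
  have sk1: "side q (Suc k) = z" by (simp add: side_W z_def)
  have P: "PB q k r (Suc k) = (spos q k, (R + 1) * Q * z / (2 * Q - 1))"
    "PA q k (Suc r) 0 = (0, (R + 1) * Q * z / (2 * Q - 1))"
    using k by (simp_all add: PA_def PB_def eps_def R_def Q_def z_def)
  have l: "z < (R + 1) * Q * z / (2 * Q - 1)"
  proof -
    have "Q * 1 \<le> Q * R" using R1 Q2 by (intro mult_left_mono) auto
    then have "2 * Q - 1 < (R + 1) * Q" by (simp add: algebra_simps)
    then have "(2 * Q - 1) * z < ((R + 1) * Q) * z" using z0
      by (intro mult_strict_right_mono) auto
    then show ?thesis using c by (simp add: divide_simps algebra_simps)
  qed
  have u: "(R + 1) * Q * z / (2 * Q - 1) < Q * z"
  proof -
    have "(R + 1) * (Q * z) < (2 * Q - 1) * (Q * z)" using R1 z0 Q2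
      by (intro mult_strict_right_mono) auto
    then show ?thesis using c by (simp add: divide_simps algebra_simps)
  qed
  show ?thesis unfolding glue1_def P
    by (rule disjI2, rule exI[of _ k]) (use k l u sk sk1 in simp)
qed

lemma dm: fixes d m K :: nat assumes "m < K"
  shows "(d * K + m) div K = d" "(d * K + m) mod K = m"
  using assms by simp_all

lemma final_pt:
  assumes q: "q \<ge> 2" and k: "k \<ge> 3"
  shows "PB q k (q - 1) k \<in> singular_pts q"
proof -
  have q1: "q \<ge> 1" using q by simp
  have Wkm: "W q (k - 1) = real q * W q k" using W_Suc[OF q1, of "k-1"] k by simp
  have sk: "spos q k = spos q (k - 1) + W q (k - 1)" using spos_Suc[of q "k-1"] k by simp
  have x: "xj q k (q - 1) k = spos q (k - 1)"
    unfolding xj_def sk Wkm using q by (simp add: of_nat_diff algebra_simps)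
  have "PB q k (q - 1) k = (xj q k (q - 1) k, side q k)" using k by (simp add: PB_def)
  then have "PB q k (q - 1) k = (spos q (k - 1), side q k)" unfolding x .
  moreover have "(spos q (k - 1), side q k) \<in> singular_pts q"
    unfolding singular_pts_def using k by (intro UnI2) auto
  ultimately show ?thesis by simp
qed

lemma idx_good:
  assumes q: "q \<ge> 2" and k: "k \<ge> 3" and i: "1 \<le> i" "i < (q - 1) * (k + 2)"
  shows "good_seg q (PA q k ((i - 1) div (k + 2) + 1) ((i - 1) mod (k + 2)))
                    (PB q k ((i - 1) div (k + 2) + 1) ((i - 1) mod (k + 2)))"
proof -
  define d where "d = (i - 1) div (k + 2)"
  define m where "m = (i - 1) mod (k + 2)"
  have im: "i - 1 = d * (k + 2) + m" unfolding d_def m_def by (rule div_mult_mod_eq[symmetric])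
  have mk: "m < k + 2" unfolding m_def by simp
  have dq: "d < q - 1"
  proof (rule ccontr)
    assume "\<not> d < q - 1"
    then have "(q - 1) * (k + 2) \<le> d * (k + 2)" by (intro mult_le_mono1) simp
    then show False using im i by linarith
  qed
  have r: "1 \<le> d + 1" "d + 1 \<le> q - 1" using dq by auto
  have cs: "m = 0 \<or> m = 1 \<or> (\<exists>j. m = Suc j \<and> 1 \<le> j \<and> j < k) \<or> m = Suc k"
  proof -
    have "m = 0 \<or> m = 1 \<or> (2 \<le> m \<and> m \<le> k) \<or> m = Suc k" using mk by linarith
    moreover have "2 \<le> m \<and> m \<le> k \<Longrightarrow> \<exists>j. m = Suc j \<and> 1 \<le> j \<and> j < k"
      by (intro exI[of _ "m - 1"]) auto
    ultimately show ?thesis by blast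
  qed
  then consider "m = 0" | "m = 1" | j where "m = Suc j" "1 \<le> j" "j < k" | "m = Suc k"
    by blast
  then have "good_seg q (PA q k (d + 1) m) (PB q k (d + 1) m)"
  proof cases
    case 1 then show ?thesis using segA_good[OF q k r] by simp
  next
    case 2 then show ?thesis using segB_good[OF q k r] by simp
  next
    case (3 j) then show ?thesis using segC_good[OF q k r 3(2,3)] by simp
  next
    case 4
    have "(d + 1) * (k + 2) < (q - 1) * (k + 2)" using im i 4 by (simp add: algebra_simps)
    then have "d + 1 < q - 1" by (simp only: mult_less_cancel2)
    then have "d + 1 + 2 \<le> q" by simp
    then show ?thesis using segD_good[OF q k r(1)] 4 by simp
  qed
  then show ?thesis unfolding d_def m_def .
qed

lemma idx_glue:
  assumes q: "q \<ge> 2" and k: "k \<ge> 3" and i: "1 \<le> i" "Suc i < (q - 1) * (k + 2)"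
  shows "glue1 q (PB q k ((i - 1) div (k + 2) + 1) ((i - 1) mod (k + 2)))
                 (PA q k ((Suc i - 1) div (k + 2) + 1) ((Suc i - 1) mod (k + 2)))"
proof -
  define d where "d = (i - 1) div (k + 2)"
  define m where "m = (i - 1) mod (k + 2)"
  have im: "i - 1 = d * (k + 2) + m" unfolding d_def m_def by (rule div_mult_mod_eq[symmetric])
  have mk: "m < k + 2" unfolding m_def by simp
  have dq: "d < q - 1"
  proof (rule ccontr)
    assume "\<not> d < q - 1"
    then have "(q - 1) * (k + 2) \<le> d * (k + 2)" by (intro mult_le_mono1) simp
    then show False using im i by linarith
  qed
  have r: "1 \<le> d + 1" "d + 1 \<le> q - 1" using dq by auto
  have si: "Suc i - 1 = d * (k + 2) + Suc m" using i im by simp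
  have cs: "m = 0 \<or> m = 1 \<or> (\<exists>j. m = Suc j \<and> 1 \<le> j \<and> j < k) \<or> m = Suc k"
  proof -
    have "m = 0 \<or> m = 1 \<or> (2 \<le> m \<and> m \<le> k) \<or> m = Suc k" using mk by linarith
    moreover have "2 \<le> m \<and> m \<le> k \<Longrightarrow> \<exists>j. m = Suc j \<and> 1 \<le> j \<and> j < k"
      by (intro exI[of _ "m - 1"]) auto
    ultimately show ?thesis by blast
  qed
  then consider "m = 0" | "m = 1" | j where "m = Suc j" "1 \<le> j" "j < k" | "m = Suc k"
    by blast
  then have "glue1 q (PB q k (d + 1) m) (PA q k ((d * (k + 2) + Suc m) div (k + 2) + 1) ((d * (k + 2) + Suc m) mod (k + 2)))"
  proof cases
    case 1
    have "(d * (k + 2) + Suc m) div (k + 2) = d" "(d * (k + 2) + Suc m) mod (k + 2) = 1"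
      using dm[of "Suc m" "k+2" d] 1 by simp_all
    then show ?thesis using glueA[OF q k r] 1 by simp
  next
    case 2
    have "(d * (k + 2) + Suc m) div (k + 2) = d" "(d * (k + 2) + Suc m) mod (k + 2) = 2"
      using dm[of "Suc m" "k+2" d] k 2 by simp_all
    then show ?thesis using glueB[OF q k r] 2 by simp
  next
    case (3 j)
    have "(d * (k + 2) + Suc m) div (k + 2) = d" "(d * (k + 2) + Suc m) mod (k + 2) = Suc (Suc j)"
      using dm[of "Suc m" "k+2" d] 3 by simp_all
    moreover have "\<not> (d + 1 = q - 1 \<and> Suc j = k)"
    proof
      assume a: "d + 1 = q - 1 \<and> Suc j = k"
      then have "Suc i = d * (k + 2) + (k + 2)" using im i 3 by simp
      also have "\<dots> = (d + 1) * (k + 2)" by simp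
      also have "\<dots> = (q - 1) * (k + 2)" using a by simp
      finally show False using i by simp
    qed
    ultimately show ?thesis using glueC[OF q k r 3(2)] 3 by simp
  next
    case 4
    have "(d + 1) * (k + 2) < (q - 1) * (k + 2)" using im i 4 by (simp add: algebra_simps)
    then have "d + 1 < q - 1" by (simp only: mult_less_cancel2)
    then have "d + 1 + 2 \<le> q" by simp
    moreover have "(d * (k + 2) + Suc m) div (k + 2) = d + 1" "(d * (k + 2) + Suc m) mod (k + 2) = 0"
      using dm[of 0 "k+2" "d+1"] 4 by (simp_all add: algebra_simps)
    ultimately show ?thesis using glueD[OF q k r(1)] 4 by simp
  qed
  then show ?thesis unfolding si unfolding d_def m_def .
qed

theorem theorem3p2:
  fixes q k :: nat
  assumes "q \<ge> 2" and "k > 2"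
  shows "saddle_connection_from q (spos q k, 0) (real (2 * q - 1), real q)"
proof -
  have q: "q \<ge> 2" using assms by simp
  have k: "k \<ge> 3" using assms by simp
  define n where "n = (q - 1) * (k + 2)"
  define a where "a i = (if i = 0 then (spos q k, 0)
      else PA q k ((i - 1) div (k + 2) + 1) ((i - 1) mod (k + 2)))" for i
  define b where "b i = (if i = 0 then (spos q (Suc k), eps q k)
      else PB q k ((i - 1) div (k + 2) + 1) ((i - 1) mod (k + 2)))" for i
  define t where "t i = (fst (b i) - fst (a i)) / (2 * real q - 1)" for i
  have good: "good_seg q (a i) (b i)" if "i < n" for i
  proof (cases "i = 0")
    case True then show ?thesis using seg0_good[OF q k] by (simp add: a_def b_def)
  next
    case False then show ?thesis using idx_good[OF q k, of i] that by (simp add: a_def b_def n_def)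
  qed
  have glue: "glue1 q (b i) (a (Suc i))" if "Suc i < n" for i
  proof (cases "i = 0")
    case True then show ?thesis using glue0[OF q k] by (simp add: a_def b_def)
  next
    case False
    have "glue1 q (PB q k ((i - 1) div (k + 2) + 1) ((i - 1) mod (k + 2)))
                 (PA q k ((Suc i - 1) div (k + 2) + 1) ((Suc i - 1) mod (k + 2)))"
      using idx_glue[OF q k, of i] that False by (simp add: n_def)
    then show ?thesis using False unfolding a_def b_def by simp
  qed
  have n1: "n \<ge> 1" using q k by (simp add: n_def)
  have last: "b (n - 1) \<in> singular_pts q"
  proof -
    obtain q' where q': "q = Suc (Suc q')" using q by (metis add_2_eq_Suc le_Suc_ex)
    have e: "n - 1 - 1 = (q - 2) * (k + 2) + k" unfolding n_def q' by simp
    have "n - 1 \<noteq> 0" using q k by (simp add: n_def)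
    then have "b (n - 1) = PB q k ((q - 2) + 1) k" unfolding b_def e using dm[of k "k+2" "q-2"] by simp
    moreover have "q - 2 + 1 = q - 1" using q by simp
    ultimately show ?thesis using final_pt[OF q k] by simp
  qed
  have F1: "(spos q k, 0) \<in> singular_pts q" unfolding singular_pts_def by blast
  have F3: "a 0 = (spos q k, 0)" by (simp add: a_def)
  have F4: "\<forall>i<n. 0 < t i \<and> b i = a i + t i *\<^sub>R (real (2 * q - 1), real q) \<and> closed_segment (a i) (b i) \<subseteq> polygon q"
  proof (intro allI impI conjI)
    fix i assume "i < n"
    note G = good_seg_use[OF q good[OF this]]
    show "0 < t i" unfolding t_def by (rule G(1))
    show "b i = a i + t i *\<^sub>R (real (2 * q - 1), real q)" unfolding t_def by (rule G(2))
    show "closed_segment (a i) (b i) \<subseteq> polygon q" by (rule G(3))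
  qed
  have F5: "\<forall>i. Suc i < n \<longrightarrow> glued q (b i) (a (Suc i)) \<and> b i \<notin> singular_pts q"
  proof (intro allI impI conjI)
    fix i assume "Suc i < n"
    then have g: "glue1 q (b i) (a (Suc i))" by (rule glue)
    then show "glued q (b i) (a (Suc i))" unfolding glued_def by (rule disjI1)
    show "b i \<notin> singular_pts q" by (rule glue1_nonsing[OF q g])
  qed
  have F6: "\<forall>i<n. open_segment (a i) (b i) \<inter> singular_pts q = {}"
  proof (intro allI impI)
    fix i assume "i < n"
    show "open_segment (a i) (b i) \<inter> singular_pts q = {}" by (rule good_seg_use(4)[OF q good[OF \<open>i < n\<close>]])
  qed
  have main: "1 \<le> n \<and> a 0 = (spos q k, 0) \<and>
      (\<forall>i<n. 0 < t i \<and> b i = a i + t i *\<^sub>R (real (2 * q - 1), real q) \<and> closed_segment (a i) (b i) \<subseteq> polygon q) \<and>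
      (\<forall>i. Suc i < n \<longrightarrow> glued q (b i) (a (Suc i)) \<and> b i \<notin> singular_pts q) \<and>
      (\<forall>i<n. open_segment (a i) (b i) \<inter> singular_pts q = {}) \<and>
      b (n - 1) \<in> singular_pts q"
    using n1 F3 F4 F5 F6 last by blast
  show ?thesis unfolding saddle_connection_from_def
    by (rule conjI[OF F1], rule exI[of _ n], rule exI[of _ a], rule exI[of _ b], rule exI[of _ t]) (rule main)
qed

end
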